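(* For every $d\ge 1$, every hierarchical hub labeling of the $d$-dimensional hypercube $Q_d$ has size at least $3^d$. Consequently, the minimum size of a hierarchical hub labeling of $Q_d$ is exactly $3^d$. *)

theory Defs
  imports Main
begin

text \<open>A walk from u to v is a nonempty list of vertices of V starting at u,
  ending at v, with consecutive entries adjacent; its length (number of edges)
  is length p - 1. A shortest path is a walk of minimal length.\<close>

definition is_walk :: "'a set \<Rightarrow> ('a \<Rightarrow> 'a \<Rightarrow> bool) \<Rightarrow> 'a list \<Rightarrow> 'a \<Rightarrow> 'a \<Rightarrow> bool" where
  "is_walk V E p u v \<longleftrightarrow> p \<noteq> [] \<and> hd p = u \<and> last p = v \<and> set p \<subseteq> V \<and>
     (\<forall>i < length p - 1. E (p ! i) (p ! Suc i))"

definition is_shortest_path :: "'a set \<Rightarrow> ('a \<Rightarrow> 'a \<Rightarrow> bool) \<Rightarrow> 'a list \<Rightarrow> 'a \<Rightarrow> 'a \<Rightarrow> bool" where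
  "is_shortest_path V E p u v \<longleftrightarrow> is_walk V E p u v \<and>
     (\<forall>q. is_walk V E q u v \<longrightarrow> length p \<le> length q)"

definition is_hub_labeling :: "'a set \<Rightarrow> ('a \<Rightarrow> 'a \<Rightarrow> bool) \<Rightarrow> ('a \<Rightarrow> 'a set) \<Rightarrow> bool" where
  "is_hub_labeling V E H \<longleftrightarrow> (\<forall>v\<in>V. H v \<subseteq> V) \<and>
     (\<forall>u\<in>V. \<forall>v\<in>V. \<exists>w \<in> H u \<inter> H v. \<exists>p. is_shortest_path V E p u v \<and> w \<in> set p)"

text \<open>Hierarchical: there is a total order (ranking, an injective map into nat)
  of the vertices such that every hub of v ranks at least as high as v.\<close>

definition is_hierarchical_hub_labeling :: "'a set \<Rightarrow> ('a \<Rightarrow> 'a \<Rightarrow> bool) \<Rightarrow> ('a \<Rightarrow> 'a set) \<Rightarrow> bool" where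
  "is_hierarchical_hub_labeling V E H \<longleftrightarrow> is_hub_labeling V E H \<and>
     (\<exists>r :: 'a \<Rightarrow> nat. inj_on r V \<and> (\<forall>v\<in>V. \<forall>w\<in>H v. r v \<le> r w))"

definition labeling_size :: "'a set \<Rightarrow> ('a \<Rightarrow> 'a set) \<Rightarrow> nat" where
  "labeling_size V H = (\<Sum>v\<in>V. card (H v))"

definition hypercube_V :: "nat \<Rightarrow> bool list set" where
  "hypercube_V d = {xs. length xs = d}"

definition hypercube_E :: "bool list \<Rightarrow> bool list \<Rightarrow> bool" where
  "hypercube_E xs ys \<longleftrightarrow> length xs = length ys \<and>
     card {i. i < length xs \<and> xs ! i \<noteq> ys ! i} = 1"

end

theory Submission
  imports Defs
begin

definition hdist :: "bool list \<Rightarrow> bool list \<Rightarrow> nat" where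
  "hdist a b = card {i. i < length a \<and> a!i \<noteq> b!i}"

definition pat :: "bool list \<Rightarrow> bool list \<Rightarrow> bool option list" where
  "pat v w = map (\<lambda>(a,b). if a = b then Some a else None) (zip v w)"

lemma finD: "finite {j. j < (n::nat) \<and> P j}"
  by (rule finite_subset[of _ "{..<n}"]) auto

lemma hdist_self[simp]: "hdist a a = 0"
  by (simp add: hdist_def)

lemma hdist0: "length a = length b \<Longrightarrow> hdist a b = 0 \<Longrightarrow> a = b"
  unfolding hdist_def using finD[of "length a" "\<lambda>j. a!j \<noteq> b!j"]
  by (auto intro: nth_equalityI)

lemma hdist_tri:
  assumes "length b = length a" "length c = length a"
  shows "hdist a c \<le> hdist a b + hdist b c"
proof -
  have "{i. i < length a \<and> a!i \<noteq> c!i} \<subseteq> {i. i < length a \<and> a!i \<noteq> b!i} \<union> {i. i < length a \<and> b!i \<noteq> c!i}"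
    by auto
  then have "card {i. i < length a \<and> a!i \<noteq> c!i} \<le> card ({i. i < length a \<and> a!i \<noteq> b!i} \<union> {i. i < length a \<and> b!i \<noteq> c!i})"
    by (intro card_mono) (auto intro: finD)
  also have "\<dots> \<le> card {i. i < length a \<and> a!i \<noteq> b!i} + card {i. i < length a \<and> b!i \<noteq> c!i}"
    by (rule card_Un_le)
  finally show ?thesis using assms by (simp add: hdist_def)
qed

lemma hdist_box:
  assumes "length b = length a" "length x = length a"
    and "hdist a x + hdist x b \<le> hdist a b" "i < length a" "a!i = b!i"
  shows "x!i = a!i"
proof (rule ccontr)
  assume ne: "x!i \<noteq> a!i"
  let ?A = "{j. j < length a \<and> a!j \<noteq> x!j}"
  let ?B = "{j. j < length a \<and> x!j \<noteq> b!j}"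
  let ?C = "{j. j < length a \<and> a!j \<noteq> b!j}"
  have "?C \<subseteq> (?A \<union> ?B) - {i}" using assms(5) by auto
  then have "card ?C \<le> card ((?A \<union> ?B) - {i})" by (intro card_mono) (auto intro: finD)
  also have "\<dots> = card (?A \<union> ?B) - 1" using ne assms(4) by (subst card_Diff_singleton) (auto intro: finD)
  also have "card (?A \<union> ?B) \<le> card ?A + card ?B" by (rule card_Un_le)
  finally have le: "card ?C \<le> card ?A + card ?B - 1" by simp
  have "i \<in> ?A" using ne assms(4) by auto
  then have "card ?A > 0" using finD[of "length a" "\<lambda>j. a!j \<noteq> x!j"] card_gt_0_iff by blast
  with le have "card ?C < card ?A + card ?B" by linarith
  then show False using assms by (simp add: hdist_def)
qed

lemma walk_cons:
  assumes "is_walk V E q b c" "a \<in> V" "E a b"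
  shows "is_walk V E (a#q) a c"
  unfolding is_walk_def
proof (intro conjI allI impI)
  show "set (a#q) \<subseteq> V" using assms unfolding is_walk_def by auto
  show "last (a#q) = c" using assms unfolding is_walk_def by auto
  fix i assume "i < length (a#q) - 1"
  then show "E ((a # q) ! i) ((a # q) ! Suc i)"
    using assms unfolding is_walk_def by (cases i) (auto simp: hd_conv_nth)
qed auto

lemma walk_exists:
  "length a = d \<Longrightarrow> length b = d \<Longrightarrow>
   \<exists>p. is_walk (hypercube_V d) hypercube_E p a b \<and> length p = hdist a b + 1"
proof (induction "hdist a b" arbitrary: a)
  case 0
  then have "a = b" using hdist0 by auto
  then show ?case using 0 by (intro exI[of _ "[a]"]) (auto simp: is_walk_def hypercube_V_def)
next
  case (Suc n)
  have "{j. j < length a \<and> a!j \<noteq> b!j} \<noteq> {}" using Suc.hyps(2) unfolding hdist_def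
    by (metis card.empty nat.simps(3))
  then obtain i where i: "i < length a" "a!i \<noteq> b!i" by auto
  define a' where "a' = a[i := b!i]"
  have la': "length a' = d" using Suc by (simp add: a'_def)
  have Dset: "{j. j < length a' \<and> a'!j \<noteq> b!j} = {j. j < length a \<and> a!j \<noteq> b!j} - {i}"
  proof (rule set_eqI)
    fix j show "j \<in> {j. j < length a' \<and> a'!j \<noteq> b!j} \<longleftrightarrow> j \<in> {j. j < length a \<and> a!j \<noteq> b!j} - {i}"
      using i by (cases "j = i") (auto simp: a'_def)
  qed
  have "hdist a' b = n" using Suc.hyps(2) i unfolding hdist_def Dset
    by (subst card_Diff_singleton) (auto intro: finD)
  then obtain q where q: "is_walk (hypercube_V d) hypercube_E q a' b" "length q = n + 1"
    using Suc.hyps(1)[of a'] la' Suc.prems by auto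
  have Eset: "{j. j < length a \<and> a!j \<noteq> a'!j} = {i}"
  proof (rule set_eqI)
    fix j show "j \<in> {j. j < length a \<and> a!j \<noteq> a'!j} \<longleftrightarrow> j \<in> {i}"
      using i by (cases "j = i") (auto simp: a'_def)
  qed
  have "hypercube_E a a'" unfolding hypercube_E_def Eset using la' Suc.prems(1) by simp
  then have "is_walk (hypercube_V d) hypercube_E (a#q) a b"
    using walk_cons q(1) Suc.prems by (fastforce simp: hypercube_V_def)
  then show ?case using q(2) Suc.hyps(2) by (intro exI[of _ "a#q"]) simp
qed


lemma walk_through:
  "length a = d \<Longrightarrow> length b = d \<Longrightarrow> length w = d \<Longrightarrow> (\<forall>i<d. a!i = b!i \<longrightarrow> w!i = a!i) \<Longrightarrow>
   \<exists>p. is_walk (hypercube_V d) hypercube_E p a b \<and> length p = hdist a b + 1 \<and> w \<in> set p"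
proof (induction "hdist a w" arbitrary: a)
  case 0
  then have "a = w" using hdist0 by auto
  obtain p where p: "is_walk (hypercube_V d) hypercube_E p a b" "length p = hdist a b + 1"
    using walk_exists[OF 0(2,3)] by blast
  have "a \<in> set p" using p(1) unfolding is_walk_def using hd_in_set by blast
  then show ?case using p \<open>a = w\<close> by blast
next
  case (Suc n)
  have "{j. j < length a \<and> a!j \<noteq> w!j} \<noteq> {}" using Suc.hyps(2) unfolding hdist_def
    by (metis card.empty nat.simps(3))
  then obtain i where i: "i < length a" "a!i \<noteq> w!i" by auto
  have ab: "a!i \<noteq> b!i" using i Suc.prems(1,4) by metis
  have wb: "w!i = b!i" using i ab by auto
  define a' where "a' = a[i := w!i]"
  have la': "length a' = d" using Suc.prems(1) by (simp add: a'_def)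
  have Dset: "{j. j < length a' \<and> a'!j \<noteq> w!j} = {j. j < length a \<and> a!j \<noteq> w!j} - {i}"
  proof (rule set_eqI)
    fix j show "j \<in> {j. j < length a' \<and> a'!j \<noteq> w!j} \<longleftrightarrow> j \<in> {j. j < length a \<and> a!j \<noteq> w!j} - {i}"
      using i by (cases "j = i") (auto simp: a'_def)
  qed
  have Dset2: "{j. j < length a' \<and> a'!j \<noteq> b!j} = {j. j < length a \<and> a!j \<noteq> b!j} - {i}"
  proof (rule set_eqI)
    fix j show "j \<in> {j. j < length a' \<and> a'!j \<noteq> b!j} \<longleftrightarrow> j \<in> {j. j < length a \<and> a!j \<noteq> b!j} - {i}"
      using i wb by (cases "j = i") (auto simp: a'_def)
  qed
  have h1: "hdist a' w = n" using Suc.hyps(2) i unfolding hdist_def Dset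
    by (subst card_Diff_singleton) (auto intro: finD)
  have h2: "hdist a' b = hdist a b - 1" using ab i unfolding hdist_def Dset2
    by (subst card_Diff_singleton) (auto intro: finD)
  have "i \<in> {j. j < length a \<and> a!j \<noteq> b!j}" using ab i by simp
  then have "card {j. j < length a \<and> a!j \<noteq> b!j} > 0"
    using finD[of "length a" "\<lambda>j. a!j \<noteq> b!j"] card_gt_0_iff by blast
  then have h3: "hdist a b \<ge> 1" unfolding hdist_def by simp
  have box': "\<forall>j<d. a'!j = b!j \<longrightarrow> w!j = a'!j"
  proof (intro allI impI)
    fix j assume "j < d" "a'!j = b!j"
    then show "w!j = a'!j" using Suc.prems(1,4) i wb by (cases "j = i") (simp_all add: a'_def)
  qed
  obtain q where q: "is_walk (hypercube_V d) hypercube_E q a' b" "length q = hdist a' b + 1" "w \<in> set q"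
    using Suc.hyps(1)[OF h1[symmetric] la' Suc.prems(2,3) box'] by blast
  have Eset: "{j. j < length a \<and> a!j \<noteq> a'!j} = {i}"
  proof (rule set_eqI)
    fix j show "j \<in> {j. j < length a \<and> a!j \<noteq> a'!j} \<longleftrightarrow> j \<in> {i}"
      using i by (cases "j = i") (auto simp: a'_def)
  qed
  have "hypercube_E a a'" unfolding hypercube_E_def Eset using la' Suc.prems(1) by simp
  moreover have "a \<in> hypercube_V d" using Suc.prems(1) by (simp add: hypercube_V_def)
  ultimately have "is_walk (hypercube_V d) hypercube_E (a#q) a b"
    using walk_cons[OF q(1)] by blast
  moreover have "length (a#q) = hdist a b + 1" using q(2) h2 h3 by simp
  moreover have "w \<in> set (a#q)" using q(3) by simp
  ultimately show ?case by blast
qed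

lemma walk_len:
  assumes "is_walk (hypercube_V d) hypercube_E p a b" "x \<in> set p"
  shows "length x = d"
  using assms by (auto simp: is_walk_def hypercube_V_def)

lemma walk_dist:
  assumes w: "is_walk (hypercube_V d) hypercube_E p a b"
  shows "i \<le> j \<Longrightarrow> j < length p \<Longrightarrow> hdist (p!i) (p!j) \<le> j - i"
proof (induction j)
  case 0
  then show ?case by simp
next
  case (Suc j)
  show ?case
  proof (cases "i = Suc j")
    case True then show ?thesis by simp
  next
    case False
    then have ij: "i \<le> j" using Suc by simp
    have IH: "hdist (p!i) (p!j) \<le> j - i" using Suc ij by simp
    have "hypercube_E (p!j) (p!Suc j)" using w Suc.prems unfolding is_walk_def by auto
    then have e: "hdist (p!j) (p!Suc j) = 1" unfolding hypercube_E_def hdist_def by blast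
    have l: "length (p!k) = d" if "k < length p" for k using walk_len[OF w] that by simp
    have "hdist (p!i) (p!Suc j) \<le> hdist (p!i) (p!j) + hdist (p!j) (p!Suc j)"
      using l Suc.prems by (intro hdist_tri) auto
    then show ?thesis using IH e ij by linarith
  qed
qed

lemma walk_lower:
  assumes w: "is_walk (hypercube_V d) hypercube_E p a b" and x: "x \<in> set p"
  shows "hdist a x + hdist x b + 1 \<le> length p"
proof -
  obtain k where k: "k < length p" "p!k = x" using x by (auto simp: in_set_conv_nth)
  have ne: "p \<noteq> []" using w by (simp add: is_walk_def)
  have a: "a = p!0" using w ne by (simp add: is_walk_def hd_conv_nth)
  have b: "b = p!(length p - 1)" using w ne by (simp add: is_walk_def last_conv_nth)
  have "hdist a x \<le> k" using walk_dist[OF w, of 0 k] k a by simp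
  moreover have "hdist x b \<le> length p - 1 - k" using walk_dist[OF w, of k "length p - 1"] k b by simp
  ultimately show ?thesis using k by linarith
qed

lemma shortest_len:
  assumes "is_shortest_path (hypercube_V d) hypercube_E p a b"
  shows "length p = hdist a b + 1"
proof -
  have w: "is_walk (hypercube_V d) hypercube_E p a b" using assms by (simp add: is_shortest_path_def)
  have ne: "p \<noteq> []" using w by (simp add: is_walk_def)
  have la: "length a = d" using walk_len[OF w, of a] w ne by (metis hd_in_set is_walk_def)
  have lb: "length b = d" using walk_len[OF w, of b] w ne by (metis last_in_set is_walk_def)
  obtain q where "is_walk (hypercube_V d) hypercube_E q a b" "length q = hdist a b + 1"
    using walk_exists[OF la lb] by auto
  then have "length p \<le> hdist a b + 1" using assms by (auto simp: is_shortest_path_def)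
  moreover have "a \<in> set p" using w unfolding is_walk_def using hd_in_set by blast
  then have "hdist a a + hdist a b + 1 \<le> length p" using walk_lower[OF w, of a] by blast
  then have "hdist a b + 1 \<le> length p" by simp
  ultimately show ?thesis by simp
qed

lemma mk_shortest:
  assumes w: "is_walk (hypercube_V d) hypercube_E p a b" and l: "length p = hdist a b + 1"
  shows "is_shortest_path (hypercube_V d) hypercube_E p a b"
  unfolding is_shortest_path_def
proof (intro conjI allI impI)
  fix q assume q: "is_walk (hypercube_V d) hypercube_E q a b"
  have "a \<in> set q" using q unfolding is_walk_def using hd_in_set by blast
  then have "hdist a a + hdist a b + 1 \<le> length q" using walk_lower[OF q, of a] by blast
  then show "length p \<le> length q" using l by simp
qed (rule w)


lemma pat_nth: "length v = length w \<Longrightarrow> i < length v \<Longrightarrow>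
  pat v w ! i = (if v!i = w!i then Some (v!i) else None)"
  by (simp add: pat_def)

lemma pat_len: "length v = length w \<Longrightarrow> length (pat v w) = length v"
  by (simp add: pat_def)

lemma finV: "finite (hypercube_V d)"
  using finite_lists_length_eq[of "UNIV :: bool set" d] by (simp add: hypercube_V_def)

lemma cardPats: "card {P :: bool option list. set P \<subseteq> UNIV \<and> length P = d} = 3 ^ d"
proof -
  have "card (UNIV :: bool option set) = 3" by (simp add: UNIV_option_conv card_image)
  then show ?thesis using card_lists_length_eq[of "UNIV :: bool option set" d] by simp
qed

lemma lower_bound:
  assumes H: "is_hierarchical_hub_labeling (hypercube_V d) hypercube_E H"
  shows "3 ^ d \<le> labeling_size (hypercube_V d) H"
proof -
  define V where "V = hypercube_V d"
  obtain r :: "bool list \<Rightarrow> nat" where r: "inj_on r V" "\<forall>v\<in>V. \<forall>w\<in>H v. r v \<le> r w"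
    using H unfolding is_hierarchical_hub_labeling_def V_def by blast
  have HV: "\<forall>v\<in>V. H v \<subseteq> V" using H unfolding is_hierarchical_hub_labeling_def is_hub_labeling_def V_def by blast
  have hubp: "\<forall>u\<in>V. \<forall>v\<in>V. \<exists>w \<in> H u \<inter> H v. \<exists>p. is_shortest_path V hypercube_E p u v \<and> w \<in> set p"
    using H unfolding is_hierarchical_hub_labeling_def is_hub_labeling_def V_def by blast
  define Pats where "Pats = {P :: bool option list. set P \<subseteq> UNIV \<and> length P = d}"
  have key: "\<exists>x. x \<in> Sigma V H \<and> pat (fst x) (snd x) = P" if P: "P \<in> Pats" for P
  proof -
    have lP: "length P = d" using P by (simp add: Pats_def)
    define C where "C = {x\<in>V. \<forall>i<d. \<forall>a. P!i = Some a \<longrightarrow> x!i = a}"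
    define x0 where "x0 = map (\<lambda>oo. case oo of Some a \<Rightarrow> a | None \<Rightarrow> False) P"
    have "x0 \<in> C" using lP by (auto simp: C_def V_def hypercube_V_def x0_def)
    have finC: "finite C" using finV[of d] by (simp add: C_def V_def)
    have "Max (r ` C) \<in> r ` C" using finC \<open>x0 \<in> C\<close> by (intro Max_in) auto
    then obtain m where m: "m \<in> C" "r m = Max (r ` C)" by auto
    have mmax: "\<forall>x\<in>C. r x \<le> r m" using m(2) finC by simp
    have mV: "m \<in> V" and lm: "length m = d" using m(1) by (auto simp: C_def V_def hypercube_V_def)
    have mP: "\<forall>i<d. \<forall>a. P!i = Some a \<longrightarrow> m!i = a" using m(1) by (simp add: C_def)
    define v where "v = map (\<lambda>(oo,b). case oo of Some a \<Rightarrow> a | None \<Rightarrow> \<not>b) (zip P m)"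
    have lv: "length v = d" using lP lm by (simp add: v_def)
    have vV: "v \<in> V" using lv by (simp add: V_def hypercube_V_def)
    have vi: "v!i = (case P!i of Some a \<Rightarrow> a | None \<Rightarrow> \<not> m!i)" if "i < d" for i
      using that lP lm by (simp add: v_def)
    have vm: "v!i = m!i \<longleftrightarrow> P!i \<noteq> None" if "i < d" for i
      using vi[OF that] mP that by (cases "P!i") auto
    have patP: "pat v m = P"
    proof (rule nth_equalityI)
      show "length (pat v m) = length P" using lv lm lP by (simp add: pat_len)
      fix i assume "i < length (pat v m)"
      then have i: "i < d" using lv lm by (simp add: pat_len)
      show "pat v m ! i = P ! i"
        using pat_nth[of v m i] lv lm i vi[OF i] mP by (cases "P!i") auto
    qed
    obtain w p where w: "w \<in> H v" "w \<in> H m" and p: "is_shortest_path V hypercube_E p v m" "w \<in> set p"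
      using hubp vV mV by blast
    have wV: "w \<in> V" using HV vV w by blast
    have lw: "length w = d" using wV by (simp add: V_def hypercube_V_def)
    have "length p = hdist v m + 1" using p(1) shortest_len unfolding V_def by blast
    moreover have "hdist v w + hdist w m + 1 \<le> length p"
      using walk_lower p unfolding is_shortest_path_def V_def by blast
    ultimately have hd: "hdist v w + hdist w m \<le> hdist v m" by simp
    have "\<forall>i<d. \<forall>a. P!i = Some a \<longrightarrow> w!i = a"
    proof (intro allI impI)
      fix i a assume i: "i < d" and Pa: "P!i = Some a"
      have "v!i = m!i" using vm[OF i] Pa by simp
      then have "w!i = v!i" using hdist_box[of m v w i] hd lv lm lw i by simp
      then show "w!i = a" using vi[OF i] Pa by simp
    qed
    then have "w \<in> C" using wV by (simp add: C_def)
    then have "r w \<le> r m" using mmax by blast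
    moreover have "r m \<le> r w" using r(2) mV w(2) by blast
    ultimately have "w = m" using r(1) wV mV by (simp add: inj_on_def)
    then have "(v, m) \<in> Sigma V H" using vV w by simp
    then show ?thesis using patP by (intro exI[of _ "(v,m)"]) simp
  qed
  then obtain f where f: "\<forall>P\<in>Pats. f P \<in> Sigma V H \<and> pat (fst (f P)) (snd (f P)) = P"
    by metis
  have inj: "inj_on f Pats" by (rule inj_onI) (metis f)
  have finS: "finite (Sigma V H)" using finV[of d] HV by (intro finite_SigmaI) (auto simp: V_def intro: finite_subset)
  have "card Pats \<le> card (Sigma V H)" using inj f finS by (intro card_inj_on_le) auto
  also have "card (Sigma V H) = labeling_size V H" unfolding labeling_size_def
    using finV[of d] HV by (intro card_SigmaI) (auto simp: V_def intro: finite_subset)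
  finally show ?thesis using cardPats[of d] by (simp add: Pats_def V_def)
qed


lemma upper_bound:
  "\<exists>H. is_hierarchical_hub_labeling (hypercube_V d) hypercube_E H \<and>
       labeling_size (hypercube_V d) H \<le> 3 ^ d"
proof -
  define V where "V = hypercube_V d"
  obtain r :: "bool list \<Rightarrow> nat" where r: "inj_on r V"
    using finite_imp_inj_to_nat_seg[OF finV[of d]] unfolding V_def by blast
  define H where "H v = {w \<in> V. \<forall>x\<in>V. (\<forall>i<d. v!i = w!i \<longrightarrow> x!i = v!i) \<longrightarrow> r x \<le> r w}" for v
  have HV: "\<forall>v\<in>V. H v \<subseteq> V" by (auto simp: H_def)
  have hier: "\<forall>v\<in>V. \<forall>w\<in>H v. r v \<le> r w" by (auto simp: H_def)
  have hub: "\<exists>w \<in> H u \<inter> H v. \<exists>p. is_shortest_path V hypercube_E p u v \<and> w \<in> set p"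
    if u: "u \<in> V" and v: "v \<in> V" for u v
  proof -
    define B where "B = {x\<in>V. \<forall>i<d. u!i = v!i \<longrightarrow> x!i = u!i}"
    have finB: "finite B" using finV[of d] by (simp add: B_def V_def)
    have "u \<in> B" using u by (simp add: B_def)
    then have "Max (r ` B) \<in> r ` B" using finB by (intro Max_in) auto
    then obtain w where w: "w \<in> B" "r w = Max (r ` B)" by auto
    have wmax: "\<forall>x\<in>B. r x \<le> r w" using w(2) finB by simp
    have wV: "w \<in> V" and wbox: "\<forall>i<d. u!i = v!i \<longrightarrow> w!i = u!i" using w(1) by (auto simp: B_def)
    have lu: "length u = d" and lv: "length v = d" and lw: "length w = d"
      using u v wV by (auto simp: V_def hypercube_V_def)
    have "w \<in> H u"
      unfolding H_def
    proof (intro CollectI conjI ballI impI wV)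
      fix x assume "x \<in> V" "\<forall>i<d. u!i = w!i \<longrightarrow> x!i = u!i"
      then have "x \<in> B" using wbox by (auto simp: B_def)
      then show "r x \<le> r w" using wmax by blast
    qed
    moreover have "w \<in> H v"
      unfolding H_def
    proof (intro CollectI conjI ballI impI wV)
      fix x assume "x \<in> V" "\<forall>i<d. v!i = w!i \<longrightarrow> x!i = v!i"
      then have "x \<in> B" using wbox by (auto simp: B_def)
      then show "r x \<le> r w" using wmax by blast
    qed
    moreover obtain p where "is_walk V hypercube_E p u v" "length p = hdist u v + 1" "w \<in> set p"
      using walk_through[OF lu lv lw wbox] unfolding V_def by blast
    then have "is_shortest_path V hypercube_E p u v" "w \<in> set p"
      using mk_shortest unfolding V_def by blast+
    ultimately show ?thesis by blast
  qed
  have HH: "is_hierarchical_hub_labeling V hypercube_E H"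
    unfolding is_hierarchical_hub_labeling_def is_hub_labeling_def
    using HV hub r hier by blast
  define Pats where "Pats = {P :: bool option list. set P \<subseteq> UNIV \<and> length P = d}"
  have finPats: "finite Pats" unfolding Pats_def
    by (rule finite_lists_length_eq) simp
  have inj: "inj_on (\<lambda>(v,w). pat v w) (Sigma V H)"
  proof (rule inj_onI, clarify)
    fix v w v' w'
    assume A: "v \<in> V" "w \<in> H v" "v' \<in> V" "w' \<in> H v'" and eq: "pat v w = pat v' w'"
    have wV: "w \<in> V" "w' \<in> V" using A HV by auto
    have l: "length v = d" "length w = d" "length v' = d" "length w' = d"
      using A wV by (auto simp: V_def hypercube_V_def)
    have pe: "(if v!i = w!i then Some (v!i) else None) = (if v'!i = w'!i then Some (v'!i) else None)"
      if "i < d" for i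
      using pat_nth[of v w i] pat_nth[of v' w' i] eq l that by simp
    have boxeq: "(\<forall>i<d. v!i = w!i \<longrightarrow> x!i = v!i) \<longleftrightarrow> (\<forall>i<d. v'!i = w'!i \<longrightarrow> x!i = v'!i)" for x
    proof -
      have "(v!i = w!i \<longrightarrow> x!i = v!i) \<longleftrightarrow> (v'!i = w'!i \<longrightarrow> x!i = v'!i)" if "i < d" for i
        using pe[OF that] by (auto split: if_splits)
      then show ?thesis by blast
    qed
    have "r w' \<le> r w" using A(2) wV(2) boxeq[of w'] unfolding H_def by auto
    moreover have "r w \<le> r w'" using A(4) wV(1) boxeq[of w] unfolding H_def by auto
    ultimately have ww: "w = w'" using r wV by (simp add: inj_on_def)
    have "v = v'"
    proof (rule nth_equalityI)
      show "length v = length v'" using l by simp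
      fix i assume "i < length v"
      then have i: "i < d" using l by simp
      show "v!i = v'!i" using pe[OF i] ww by (auto split: if_splits)
    qed
    then show "v = v' \<and> w = w'" using ww by simp
  qed
  have img: "(\<lambda>(v,w). pat v w) ` (Sigma V H) \<subseteq> Pats"
  proof clarify
    fix v w assume "v \<in> V" "w \<in> H v"
    then have "length v = d" "length w = d" using HV by (auto simp: V_def hypercube_V_def)
    then show "pat v w \<in> Pats" by (simp add: Pats_def pat_len)
  qed
  have "labeling_size V H = card (Sigma V H)" unfolding labeling_size_def
    using finV[of d] HV by (intro card_SigmaI[symmetric]) (auto simp: V_def intro: finite_subset)
  also have "\<dots> \<le> card Pats" using inj img finPats by (rule card_inj_on_le)
  also have "\<dots> = 3 ^ d" using cardPats[of d] by (simp add: Pats_def)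
  finally show ?thesis using HH unfolding V_def by blast
qed

theorem mainTheorem3:
  fixes d :: nat
  assumes "d \<ge> 1"
  shows "(\<forall>H. is_hierarchical_hub_labeling (hypercube_V d) hypercube_E H \<longrightarrow>
            labeling_size (hypercube_V d) H \<ge> 3 ^ d)
       \<and> Min {labeling_size (hypercube_V d) H | H.
               is_hierarchical_hub_labeling (hypercube_V d) hypercube_E H} = 3 ^ d"
proof
  show A: "\<forall>H. is_hierarchical_hub_labeling (hypercube_V d) hypercube_E H \<longrightarrow>
            labeling_size (hypercube_V d) H \<ge> 3 ^ d" using lower_bound by blast
  let ?S = "{labeling_size (hypercube_V d) H | H.
               is_hierarchical_hub_labeling (hypercube_V d) hypercube_E H}"
  have bnd: "labeling_size (hypercube_V d) H \<le> card (hypercube_V d) * card (hypercube_V d)"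
    if "is_hierarchical_hub_labeling (hypercube_V d) hypercube_E H" for H
  proof -
    have "\<forall>v\<in>hypercube_V d. H v \<subseteq> hypercube_V d"
      using that unfolding is_hierarchical_hub_labeling_def is_hub_labeling_def by blast
    then have "labeling_size (hypercube_V d) H \<le> (\<Sum>v\<in>hypercube_V d. card (hypercube_V d))"
      unfolding labeling_size_def using finV[of d] by (intro sum_mono card_mono) auto
    then show ?thesis by simp
  qed
  have fin: "finite ?S"
    by (rule finite_subset[of _ "{..card (hypercube_V d) * card (hypercube_V d)}"]) (auto dest: bnd)
  obtain H where H: "is_hierarchical_hub_labeling (hypercube_V d) hypercube_E H"
    "labeling_size (hypercube_V d) H \<le> 3 ^ d" using upper_bound by blast
  have "labeling_size (hypercube_V d) H = 3 ^ d" using H lower_bound by (simp add: le_antisym)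
  then have mem: "3 ^ d \<in> ?S" using H(1) by force
  show "Min ?S = 3 ^ d"
    by (rule Min_eqI[OF fin _ mem]) (use A in auto)
qed

end
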